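(* Let $p\ge 1$, $n,m\ge 1$, and let $\tilde X_1,\dots,\tilde X_n\in\mathbb R^p$, $\tilde Y_1,\dots,\tilde Y_n\in\mathbb R$ and $(X_1,Y_1),\dots,(X_m,Y_m)\in\mathbb R^p\times\mathbb R$ be given data. Let $f(t)=c_\alpha\exp(-d^{-\alpha}|t|^\alpha)$, $t\in\mathbb R$, for some $\alpha\ge 1$, $d>0$ and $c_\alpha=\frac{\alpha}{2d\Gamma(1/\alpha)}$. Define, for $\beta\in\mathbb R^p$, $$\ell_{n,m}(\beta)=\frac{1}{n+m}\sum_{j=1}^n\log\Big(\frac1n\sum_{i=1}^n f(\tilde Y_j-\beta^\top\tilde X_i)\Big)+\frac{1}{n+m}\sum_{k=1}^m\log f(Y_k-\beta^\top X_k).$$ If the matrix $M\in\mathbb R^{m\times p}$ whose $k$-th row is $X_k^\top$ has $\operatorname{rank}(M)=p$, then $\ell_{n,m}$ admits at least one maximizer over $\mathbb R^p$.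
   Context: This is the "semi-supervised learning empirical log-likelihood" for the linear model $Y=\beta_0^\top X+\epsilon$ with noise density $f$, combining an unmatched sample ($\tilde X_i$, $\tilde Y_j$) and a matched sample $(X_k,Y_k)$. *)

theory Defs
  imports "HOL-Analysis.Analysis"
begin

definition gn_density :: "real \<Rightarrow> real \<Rightarrow> real \<Rightarrow> real" where
  "gn_density \<alpha> d t = \<alpha> / (2 * d * Gamma (1 / \<alpha>)) * exp (- (d powr (-\<alpha>)) * (\<bar>t\<bar> powr \<alpha>))"

text \<open>The unmatched sample is indexed by
  the finite type 'n (so n = CARD('n)), the matched sample by rows of the matrix
  M :: real^'p^'m (row k is X_k, so m = CARD('m)), dimension p = CARD('p).\<close>
definition ssl_loglik ::
  "real \<Rightarrow> real \<Rightarrow> ('n::finite \<Rightarrow> real^'p::finite) \<Rightarrow> ('n \<Rightarrow> real)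
    \<Rightarrow> real^'p^'m::finite \<Rightarrow> ('m \<Rightarrow> real) \<Rightarrow> real^'p \<Rightarrow> real" where
  "ssl_loglik \<alpha> d Xt Yt M Y \<beta> =
     (1 / real (CARD('n) + CARD('m))) *
       (\<Sum>j\<in>UNIV. ln ((1 / real CARD('n)) * (\<Sum>i\<in>UNIV. gn_density \<alpha> d (Yt j - \<beta> \<bullet> Xt i))))
   + (1 / real (CARD('n) + CARD('m))) *
       (\<Sum>k\<in>UNIV. ln (gn_density \<alpha> d (Y k - \<beta> \<bullet> (M $ k))))"

end

theory Submission
  imports Defs
begin

lemma gn_facts:
  assumes "\<alpha> \<ge> 1" "d > 0"
  defines "c \<equiv> \<alpha> / (2 * d * Gamma (1 / \<alpha>))" and "k \<equiv> d powr (-\<alpha>)"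
  shows "c > 0" "k > 0" "\<And>t. gn_density \<alpha> d t = c * exp (- k * \<bar>t\<bar> powr \<alpha>)"
    "\<And>t. gn_density \<alpha> d t > 0" "\<And>t. gn_density \<alpha> d t \<le> c"
    "\<And>t. ln (gn_density \<alpha> d t) = ln c - k * \<bar>t\<bar> powr \<alpha>"
    "continuous_on UNIV (gn_density \<alpha> d)"
proof -
  show c: "c > 0" using assms by (auto simp: c_def)
  show k: "k > 0" using assms by (auto simp: k_def)
  show eq: "\<And>t. gn_density \<alpha> d t = c * exp (- k * \<bar>t\<bar> powr \<alpha>)"
    by (simp add: gn_density_def c_def k_def)
  show "\<And>t. gn_density \<alpha> d t > 0" using c by (simp add: eq)
  show "\<And>t. gn_density \<alpha> d t \<le> c"
  proof -
    fix t
    have "exp (- k * \<bar>t\<bar> powr \<alpha>) \<le> 1" using k by simp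
    then show "gn_density \<alpha> d t \<le> c" using c by (simp add: eq)
  qed
  show "\<And>t. ln (gn_density \<alpha> d t) = ln c - k * \<bar>t\<bar> powr \<alpha>"
    using c by (simp add: eq ln_mult)
  have "continuous_on UNIV (\<lambda>t. \<bar>t\<bar> powr \<alpha>)"
    using assms by (intro continuous_on_powr') (auto intro!: continuous_intros)
  then show "continuous_on UNIV (gn_density \<alpha> d)"
    unfolding eq by (auto intro!: continuous_intros)
qed

lemma powr_ge_lin:
  fixes t \<alpha> :: real
  assumes "\<alpha> \<ge> 1"
  shows "\<bar>t\<bar> - 1 \<le> \<bar>t\<bar> powr \<alpha>"
proof (cases "\<bar>t\<bar> \<ge> 1")
  case True
  then have "\<bar>t\<bar> powr 1 \<le> \<bar>t\<bar> powr \<alpha>" using assms by (intro powr_mono) auto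
  then show ?thesis using True by simp
next
  case False
  then show ?thesis by (smt (verit) powr_ge_zero)
qed

theorem lemma1:
  fixes Xt :: "'n::finite \<Rightarrow> real^'p::finite" and Yt :: "'n \<Rightarrow> real"
    and M :: "real^'p^'m::finite" and Y :: "'m \<Rightarrow> real"
    and \<alpha> d :: real
  assumes "\<alpha> \<ge> 1" and "d > 0"
    and "rank M = CARD('p)"
  shows "\<exists>\<beta>0. \<forall>\<beta>. ssl_loglik \<alpha> d Xt Yt M Y \<beta> \<le> ssl_loglik \<alpha> d Xt Yt M Y \<beta>0"
proof -
  define c where "c = \<alpha> / (2 * d * Gamma (1 / \<alpha>))"
  define k where "k = d powr (-\<alpha>)"
  note F = gn_facts[OF assms(1,2), folded c_def k_def]
  define L where "L = ssl_loglik \<alpha> d Xt Yt M Y"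
  define N where "N = real (CARD('n) + CARD('m))"
  have N: "N > 0" unfolding N_def by (simp add: add_pos_pos)
  have cont: "continuous_on UNIV L"
    unfolding L_def ssl_loglik_def
    apply (intro continuous_intros continuous_on_compose2[OF F(7)] continuous_on_ln)
    apply (auto intro!: continuous_intros)
    apply (metis F(4) UNIV_not_empty finite less_irrefl sum_pos)
    by (metis F(4) less_irrefl)
  have inj: "inj ((*v) M)" using assms(3) full_rank_injective by blast
  obtain e where e: "e > 0" "\<And>x. e * norm x \<le> norm (M *v x)"
    using injective_imp_isometric[of UNIV "(*v) M"] inj
    by (auto simp: subspace_UNIV inj_on_def
        matrix_vector_mult_0_right)
  have first: "ln ((1 / real CARD('n)) * (\<Sum>i\<in>UNIV. gn_density \<alpha> d (Yt j - \<beta> \<bullet> Xt i))) \<le> ln c"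
    for j \<beta>
  proof -
    have pos: "0 < (1 / real CARD('n)) * (\<Sum>i\<in>UNIV. gn_density \<alpha> d (Yt j - \<beta> \<bullet> Xt i))"
      by (intro mult_pos_pos sum_pos F(4)) auto
    have "(\<Sum>i\<in>UNIV. gn_density \<alpha> d (Yt j - \<beta> \<bullet> Xt i)) \<le> (\<Sum>i\<in>(UNIV::'n set). c)"
      by (intro sum_mono F(5))
    then have "(1 / real CARD('n)) * (\<Sum>i\<in>UNIV. gn_density \<alpha> d (Yt j - \<beta> \<bullet> Xt i)) \<le> c"
      by (simp add: field_simps)
    then show ?thesis using pos by simp
  qed
  have upper: "N * L \<beta> \<le> N * ln c - k * (\<Sum>i\<in>UNIV. \<bar>Y i - \<beta> \<bullet> (M $ i)\<bar> powr \<alpha>)" for \<beta>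
  proof -
    have "N * L \<beta> = (\<Sum>j\<in>UNIV. ln ((1 / real CARD('n)) * (\<Sum>i\<in>UNIV. gn_density \<alpha> d (Yt j - \<beta> \<bullet> Xt i))))
        + (\<Sum>i\<in>UNIV. ln (gn_density \<alpha> d (Y i - \<beta> \<bullet> (M $ i))))"
      using N unfolding L_def ssl_loglik_def N_def[symmetric]
      by (simp add: distrib_left mult.assoc[symmetric])
    also have "\<dots> \<le> (\<Sum>j\<in>(UNIV::'n set). ln c) + (\<Sum>i\<in>UNIV. ln c - k * \<bar>Y i - \<beta> \<bullet> (M $ i)\<bar> powr \<alpha>)"
      by (intro add_mono sum_mono first) (simp add: F(6))
    also have "\<dots> = N * ln c - k * (\<Sum>i\<in>UNIV. \<bar>Y i - \<beta> \<bullet> (M $ i)\<bar> powr \<alpha>)"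
      by (simp add: N_def sum_subtractf sum_distrib_left algebra_simps)
    finally show ?thesis .
  qed
  define S where "S = {\<beta>. L 0 \<le> L \<beta>}"
  define B where "B = (N * ln c - N * L 0) / k + real CARD('m) + (\<Sum>i\<in>UNIV. \<bar>Y i\<bar>)"
  have bnd: "norm \<beta> \<le> B / e" if "\<beta> \<in> S" for \<beta>
  proof -
    have "N * L 0 \<le> N * L \<beta>" using that N by (simp add: S_def)
    then have "k * (\<Sum>i\<in>UNIV. \<bar>Y i - \<beta> \<bullet> (M $ i)\<bar> powr \<alpha>) \<le> N * ln c - N * L 0"
      using upper[of \<beta>] by linarith
    then have A: "(\<Sum>i\<in>UNIV. \<bar>Y i - \<beta> \<bullet> (M $ i)\<bar> powr \<alpha>) \<le> (N * ln c - N * L 0) / k"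
      using F(2) by (simp add: field_simps)
    have "(\<Sum>i\<in>UNIV. \<bar>Y i - \<beta> \<bullet> (M $ i)\<bar> - 1) \<le> (\<Sum>i\<in>UNIV. \<bar>Y i - \<beta> \<bullet> (M $ i)\<bar> powr \<alpha>)"
      by (intro sum_mono powr_ge_lin assms(1))
    then have A2: "(\<Sum>i\<in>UNIV. \<bar>Y i - \<beta> \<bullet> (M $ i)\<bar>) \<le> (N * ln c - N * L 0) / k + real CARD('m)"
      using A by (simp add: sum_subtractf)
    have "norm (M *v \<beta>) \<le> (\<Sum>i\<in>UNIV. \<bar>(M *v \<beta>) $ i\<bar>)" by (rule norm_le_l1_cart)
    also have "\<dots> \<le> (\<Sum>i\<in>UNIV. \<bar>Y i - \<beta> \<bullet> (M $ i)\<bar> + \<bar>Y i\<bar>)"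
      by (intro sum_mono) (simp add: matrix_vector_mul_component inner_commute)
    also have "\<dots> \<le> B" using A2 by (simp add: B_def sum.distrib)
    finally have "e * norm \<beta> \<le> B" using e(2)[of \<beta>] by linarith
    then show ?thesis using e(1) by (simp add: field_simps)
  qed
  have "compact S"
  unfolding compact_eq_bounded_closed
  proof
    show "bounded S" unfolding bounded_iff using bnd by (intro exI[of _ "B / e"]) blast
    show "closed S" unfolding S_def
      by (rule closed_Collect_le[OF continuous_on_const cont])
  qed
  moreover have "S \<noteq> {}" by (auto simp: S_def)
  moreover have "continuous_on S L" using cont continuous_on_subset by blast
  ultimately obtain b where b: "b \<in> S" "\<And>y. y \<in> S \<Longrightarrow> L y \<le> L b"
    using continuous_attains_sup[of S L] by auto
  have "L \<beta> \<le> L b" for \<beta>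
  proof (cases "\<beta> \<in> S")
    case True then show ?thesis using b by blast
  next
    case False then show ?thesis using b(1) by (simp add: S_def)
  qed
  then show ?thesis by (intro exI[of _ b]) (simp add: L_def)
qed

end
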